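(* Let $A,B$ be an LR pair on $V$. Then there exists a unique $\mathbb F$-algebra antiautomorphism $\dagger$ of $\mathrm{End}(V)$ such that $A^\dagger=B$ and $B^\dagger=A$. Moreover $(X^\dagger)^\dagger=X$ for all $X\in\mathrm{End}(V)$.
   Context: Let $V$ be a vector space over a field $\mathbb F$ with $\dim V=d+1$. A decomposition of $V$ is a sequence $(V_i)_{i=0}^d$ of one-dimensional subspaces with $V=\bigoplus_{i=0}^d V_i$. An element $X\in\mathrm{End}(V)$ lowers the decomposition if $XV_i=V_{i-1}$ for $1\le i\le d$ and $XV_0=0$; it raises it if $XV_i=V_{i+1}$ for $0\le i\le d-1$ and $XV_d=0$. An ordered pair $A,B\in\mathrm{End}(V)$ is an LR pair on $V$ if some decomposition of $V$ is lowered by $A$ and raised by $B$. An antiautomorphism of $\mathrm{End}(V)$ is an $\mathbb F$-linear bijection $\sigma$ with $(XY)^\sigma=Y^\sigma X^\sigma$. *)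

theory Defs
  imports Main "HOL.Vector_Spaces"
begin

definition End :: "('a::field \<Rightarrow> 'v::ab_group_add \<Rightarrow> 'v) \<Rightarrow> ('v \<Rightarrow> 'v) set" where
  "End scale = {X. Vector_Spaces.linear scale scale X}"

definition is_decomposition ::
  "('a::field \<Rightarrow> 'v::ab_group_add \<Rightarrow> 'v) \<Rightarrow> nat \<Rightarrow> (nat \<Rightarrow> 'v set) \<Rightarrow> bool" where
  "is_decomposition scale d W \<longleftrightarrow>
     (\<forall>i\<le>d. module.subspace scale (W i) \<and> vector_space.dim scale (W i) = 1) \<and>
     (\<forall>x. \<exists>!w. (\<forall>i>d. w i = 0) \<and> (\<forall>i\<le>d. w i \<in> W i) \<and> x = (\<Sum>i\<le>d. w i))"

definition lowers ::
  "nat \<Rightarrow> (nat \<Rightarrow> 'v::ab_group_add set) \<Rightarrow> ('v \<Rightarrow> 'v) \<Rightarrow> bool" where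
  "lowers d W X \<longleftrightarrow> (\<forall>i. 1 \<le> i \<and> i \<le> d \<longrightarrow> X ` W i = W (i - 1)) \<and> X ` W 0 = {0}"

definition raises ::
  "nat \<Rightarrow> (nat \<Rightarrow> 'v::ab_group_add set) \<Rightarrow> ('v \<Rightarrow> 'v) \<Rightarrow> bool" where
  "raises d W X \<longleftrightarrow> (\<forall>i. i + 1 \<le> d \<longrightarrow> X ` W i = W (i + 1)) \<and> X ` W d = {0}"

definition LR_pair ::
  "('a::field \<Rightarrow> 'v::ab_group_add \<Rightarrow> 'v) \<Rightarrow> nat \<Rightarrow> ('v \<Rightarrow> 'v) \<Rightarrow> ('v \<Rightarrow> 'v) \<Rightarrow> bool" where
  "LR_pair scale d A B \<longleftrightarrow> A \<in> End scale \<and> B \<in> End scale \<and>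
     (\<exists>W. is_decomposition scale d W \<and> lowers d W A \<and> raises d W B)"

definition antiautomorphism ::
  "('a::field \<Rightarrow> 'v::ab_group_add \<Rightarrow> 'v) \<Rightarrow> (('v \<Rightarrow> 'v) \<Rightarrow> ('v \<Rightarrow> 'v)) \<Rightarrow> bool" where
  "antiautomorphism scale \<sigma> \<longleftrightarrow>
     bij_betw \<sigma> (End scale) (End scale) \<and>
     (\<forall>X\<in>End scale. \<forall>Y\<in>End scale. \<sigma> (\<lambda>v. X v + Y v) = (\<lambda>v. \<sigma> X v + \<sigma> Y v)) \<and>
     (\<forall>c. \<forall>X\<in>End scale. \<sigma> (\<lambda>v. scale c (X v)) = (\<lambda>v. scale c (\<sigma> X v))) \<and>
     (\<forall>X\<in>End scale. \<forall>Y\<in>End scale. \<sigma> (X \<circ> Y) = \<sigma> Y \<circ> \<sigma> X)"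

end

theory Submission
  imports Defs
begin


lemma (in vector_space) dim1_gen:
  assumes "subspace S" "dim S = 1"
  shows "\<exists>u. u \<noteq> 0 \<and> S = range (\<lambda>c. c *s u)"
proof -
  obtain Bs where Bs: "Bs \<subseteq> S" "independent Bs" "S \<subseteq> span Bs" "card Bs = dim S"
    using basis_exists by blast
  then obtain u where u: "Bs = {u}" using assms(2) card_1_singletonE by metis
  have "u \<noteq> 0" using Bs(2) u dependent_zero by auto
  moreover have "S = range (\<lambda>c. c *s u)"
  proof
    show "S \<subseteq> range (\<lambda>c. c *s u)" using Bs(3) u span_singleton by auto
    show "range (\<lambda>c. c *s u) \<subseteq> S" using Bs(1) u subspace_scale[OF assms(1)] by auto
  qed
  ultimately show ?thesis by blast
qed

locale LRsetup = vector_space scale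
  for scale :: "'a::field \<Rightarrow> 'v::ab_group_add \<Rightarrow> 'v" (infixr "*s" 75) +
  fixes d :: nat and A B :: "'v \<Rightarrow> 'v" and W :: "nat \<Rightarrow> 'v set"
  assumes linA: "Vector_Spaces.linear scale scale A"
    and linB: "Vector_Spaces.linear scale scale B"
    and dec: "is_decomposition scale d W"
    and low: "lowers d W A" and rai: "raises d W B"
begin

definition lin :: "('v \<Rightarrow> 'v) \<Rightarrow> bool" where
  "lin X \<longleftrightarrow> (\<forall>x y. X (x + y) = X x + X y) \<and> (\<forall>c x. X (c *s x) = c *s X x)"

lemma End_lin: "End scale = {X. lin X}"
  unfolding End_def lin_def linear_iff using vector_space_axioms by auto

lemma lin_add: "lin X \<Longrightarrow> X (x + y) = X x + X y" unfolding lin_def by auto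
lemma lin_scale: "lin X \<Longrightarrow> X (c *s x) = c *s X x" unfolding lin_def by auto
lemma lin_zero: "lin X \<Longrightarrow> X 0 = 0"
  using lin_add[of X 0 0] by simp
lemma lin_sum: "lin X \<Longrightarrow> X (sum f S) = (\<Sum>i\<in>S. X (f i))"
  by (induction S rule: infinite_finite_induct) (auto simp: lin_zero lin_add)

lemma linA': "lin A" and linB': "lin B"
  using linA linB unfolding lin_def linear_iff by auto

lemma lin_comp: "lin X \<Longrightarrow> lin Y \<Longrightarrow> lin (X \<circ> Y)"
  unfolding lin_def by auto
lemma lin_id: "lin id" unfolding lin_def by auto
lemma lin_pow: "lin X \<Longrightarrow> lin (X ^^ n)"
  by (induction n) (auto simp: lin_id lin_comp)

lemma Wi: "i \<le> d \<Longrightarrow> \<exists>u. u \<noteq> 0 \<and> W i = range (\<lambda>c. c *s u)"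
  using dec unfolding is_decomposition_def
  by (intro vector_space.dim1_gen) (auto simp: vector_space_axioms)

definition v0 where "v0 = (SOME u. u \<noteq> 0 \<and> W 0 = range (\<lambda>c. c *s u))"
definition v where "v i = (B ^^ i) v0"

lemma vW: "i \<le> d \<Longrightarrow> v i \<noteq> 0 \<and> W i = range (\<lambda>c. c *s v i)"
proof (induction i)
  case 0
  then show ?case using someI_ex[OF Wi[of 0]] unfolding v_def v0_def by simp
next
  case (Suc i)
  then have IH: "v i \<noteq> 0" "W i = range (\<lambda>c. c *s v i)" by auto
  have "W (Suc i) = B ` W i" using rai Suc.prems unfolding raises_def by auto
  also have "\<dots> = range (\<lambda>c. c *s v (Suc i))"
    using IH(2) linB' by (auto simp: v_def lin_scale image_iff)
  finally have eq: "W (Suc i) = range (\<lambda>c. c *s v (Suc i))" .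
  obtain u where "u \<noteq> 0" "W (Suc i) = range (\<lambda>c. c *s u)" using Wi[OF Suc.prems] by blast
  then have "u \<in> range (\<lambda>c. c *s v (Suc i))" using eq by (metis rangeI scale_one)
  then have "v (Suc i) \<noteq> 0" using \<open>u \<noteq> 0\<close> by auto
  then show ?case using eq by simp
qed

lemma Bvd: "B (v d) = 0"
proof -
  have "v d \<in> W d" using vW[of d] by (metis rangeI scale_one order_refl)
  then show ?thesis using rai unfolding raises_def by auto
qed

lemma Bv: "B (v i) = v (Suc i)" unfolding v_def by simp

lemma v_big: "i > d \<Longrightarrow> v i = 0"
proof (induction i)
  case 0 then show ?case by simp
next
  case (Suc i)
  show ?case
  proof (cases "i = d")
    case True then show ?thesis using Bvd Bv by simp
  next
    case False then show ?thesis using Suc linB' by (simp add: Bv[symmetric] lin_zero)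
  qed
qed


lemma exists_coords: "\<exists>c. x = (\<Sum>i\<le>d. c i *s v i)"
proof -
  obtain w where w: "\<forall>i\<le>d. w i \<in> W i" "x = (\<Sum>i\<le>d. w i)"
    using dec unfolding is_decomposition_def by blast
  define c where "c i = (SOME c. w i = c *s v i)" for i
  have "w i = c i *s v i" if "i \<le> d" for i
  proof -
    have "\<exists>c. w i = c *s v i" using w(1) that vW[OF that] by auto
    then show ?thesis unfolding c_def by (rule someI_ex)
  qed
  then have "x = (\<Sum>i\<le>d. c i *s v i)" using w(2) by simp
  then show ?thesis by blast
qed

definition cf where "cf x = (SOME c. x = (\<Sum>i\<le>d. c i *s v i))"
definition coord where "coord i x = cf x i"

lemma coord_expand: "x = (\<Sum>i\<le>d. coord i x *s v i)"
  unfolding coord_def cf_def using someI_ex[OF exists_coords[of x]] .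

lemma coord_unique:
  assumes "x = (\<Sum>i\<le>d. c i *s v i)" "i \<le> d"
  shows "coord i x = c i"
proof -
  define w1 where "w1 i = (if i \<le> d then c i *s v i else 0)" for i
  define w2 where "w2 i = (if i \<le> d then coord i x *s v i else 0)" for i
  have P1: "(\<forall>i>d. w1 i = 0) \<and> (\<forall>i\<le>d. w1 i \<in> W i) \<and> x = (\<Sum>i\<le>d. w1 i)"
    using vW assms(1) by (auto simp: w1_def)
  have P2: "(\<forall>i>d. w2 i = 0) \<and> (\<forall>i\<le>d. w2 i \<in> W i) \<and> x = (\<Sum>i\<le>d. w2 i)"
    using vW coord_expand[of x] by (auto simp: w2_def)
  have "\<exists>!w. (\<forall>i>d. w i = 0) \<and> (\<forall>i\<le>d. w i \<in> W i) \<and> x = (\<Sum>i\<le>d. w i)"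
    using dec unfolding is_decomposition_def by blast
  then have "w1 = w2" using P1 P2 by blast
  then have "c i *s v i = coord i x *s v i" using assms(2) unfolding w1_def w2_def by meson
  then show ?thesis using vW[OF assms(2)] by simp
qed

lemma coord_add: "i \<le> d \<Longrightarrow> coord i (x + y) = coord i x + coord i y"
  by (rule coord_unique)
     (simp add: scale_left_distrib sum.distrib coord_expand[of x, symmetric] coord_expand[of y, symmetric])

lemma coord_scale: "i \<le> d \<Longrightarrow> coord i (a *s x) = a * coord i x"
proof (rule coord_unique)
  have "a *s x = a *s (\<Sum>i\<le>d. coord i x *s v i)"
    using coord_expand[of x] by (rule arg_cong)
  then show "a *s x = (\<Sum>i\<le>d. (a * coord i x) *s v i)" by (simp add: scale_sum_right)
qed

lemma coord_zero: "i \<le> d \<Longrightarrow> coord i 0 = 0"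
  using coord_scale[of i 0 0] by simp

lemma coord_sum: "i \<le> d \<Longrightarrow> coord i (sum f S) = (\<Sum>k\<in>S. coord i (f k))"
  by (induction S rule: infinite_finite_induct) (auto simp: coord_zero coord_add)

lemma coord_v: "i \<le> d \<Longrightarrow> j \<le> d \<Longrightarrow> coord i (v j) = (if i = j then 1 else 0)"
proof (rule coord_unique)
  assume "j \<le> d"
  have "(\<Sum>i\<le>d. (if i = j then 1 else 0) *s v i) = (\<Sum>i\<le>d. if i = j then v i else 0)"
    by (rule sum.cong) auto
  also have "\<dots> = v j" using \<open>j \<le> d\<close> by simp
  finally show "v j = (\<Sum>i\<le>d. (if i = j then 1 else 0) *s v i)" by simp
qed

lemma lin_expand: "lin X \<Longrightarrow> X y = (\<Sum>j\<le>d. coord j y *s X (v j))"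
  by (subst coord_expand[of y]) (simp add: lin_sum lin_scale)

definition mat where "mat X i j = coord i (X (v j))"

definition mkop where
  "mkop M y = (\<Sum>j\<le>d. \<Sum>i\<le>d. (M i j * coord j y) *s v i)"

lemma lin_mkop: "lin (mkop M)"
  unfolding lin_def mkop_def
  by (auto simp: coord_add coord_scale algebra_simps sum.distrib scale_sum_right
           intro!: sum.cong)

lemma mat_mkop: "i \<le> d \<Longrightarrow> j \<le> d \<Longrightarrow> mat (mkop M) i j = M i j"
proof -
  assume ij: "i \<le> d" "j \<le> d"
  have "mat (mkop M) i j = (\<Sum>j'\<le>d. \<Sum>i'\<le>d. (M i' j' * coord j' (v j)) * coord i (v i'))"
    unfolding mat_def mkop_def using ij by (simp add: coord_sum coord_scale)
  also have "\<dots> = (\<Sum>j'\<le>d. \<Sum>i'\<le>d. if j' = j \<and> i' = i then M i j else 0)"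
    using ij by (intro sum.cong refl) (auto simp: coord_v)
  also have "\<dots> = (\<Sum>j'\<le>d. if j' = j then (\<Sum>i'\<le>d. if i' = i then M i j else 0) else 0)"
    by (intro sum.cong refl) auto
  also have "\<dots> = M i j" using ij by (simp add: sum.delta)
  finally show ?thesis .
qed

lemma lin_eq_mat:
  assumes "lin X" "lin Y" "\<And>i j. i \<le> d \<Longrightarrow> j \<le> d \<Longrightarrow> mat X i j = mat Y i j"
  shows "X = Y"
proof
  fix y
  have "X (v j) = Y (v j)" if "j \<le> d" for j
  proof -
    have "X (v j) = (\<Sum>i\<le>d. mat X i j *s v i)" unfolding mat_def by (rule coord_expand)
    also have "\<dots> = (\<Sum>i\<le>d. mat Y i j *s v i)" using assms(3)[OF _ that] by simp
    also have "\<dots> = Y (v j)" unfolding mat_def by (rule coord_expand[symmetric])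
    finally show ?thesis .
  qed
  then have "(\<Sum>j\<le>d. coord j y *s X (v j)) = (\<Sum>j\<le>d. coord j y *s Y (v j))" by simp
  then show "X y = Y y" using lin_expand[OF assms(1), of y] lin_expand[OF assms(2), of y] by simp
qed

lemma mat_comp:
  assumes "lin X" "lin Y" "i \<le> d" "j \<le> d"
  shows "mat (X \<circ> Y) i j = (\<Sum>k\<le>d. mat X i k * mat Y k j)"
proof -
  have "mat (X \<circ> Y) i j = coord i (\<Sum>k\<le>d. coord k (Y (v j)) *s X (v k))"
    unfolding mat_def comp_def by (rule arg_cong[OF lin_expand[OF assms(1)]])
  also have "\<dots> = (\<Sum>k\<le>d. mat X i k * mat Y k j)"
    using assms(3) by (simp add: coord_sum coord_scale mat_def mult.commute)
  finally show ?thesis .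
qed

lemma mat_plus: "i \<le> d \<Longrightarrow> mat (\<lambda>y. X y + Y y) i j = mat X i j + mat Y i j"
  unfolding mat_def by (simp add: coord_add)
lemma mat_smult: "i \<le> d \<Longrightarrow> mat (\<lambda>y. c *s X y) i j = c * mat X i j"
  unfolding mat_def by (simp add: coord_scale)

end
context LRsetup begin

lemma lin_plus: "lin X \<Longrightarrow> lin Y \<Longrightarrow> lin (\<lambda>y. X y + Y y)"
  unfolding lin_def by (auto simp: algebra_simps)
lemma lin_smult: "lin X \<Longrightarrow> lin (\<lambda>y. c *s X y)"
  unfolding lin_def by (auto simp: algebra_simps scale_left_commute)

lemma v_in_W: "i \<le> d \<Longrightarrow> v i \<in> W i"
  using vW[of i] by (metis rangeI scale_one)

definition alpha where "alpha j = coord (j - 1) (A (v j))"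

lemma Av0: "A (v 0) = 0"
  using low v_in_W[of 0] unfolding lowers_def by auto

lemma Avj:
  assumes "1 \<le> j" "j \<le> d"
  shows "A (v j) = alpha j *s v (j - 1) \<and> alpha j \<noteq> 0"
proof -
  have WA: "A ` W j = W (j - 1)" using low assms unfolding lowers_def by auto
  have jd: "j - 1 \<le> d" using assms by simp
  have "A (v j) \<in> W (j - 1)" using WA v_in_W[OF assms(2)] by blast
  then obtain c where c: "A (v j) = c *s v (j - 1)" using vW[OF jd] by auto
  have al: "alpha j = c" unfolding alpha_def c using jd by (simp add: coord_scale coord_v)
  have "v (j - 1) \<in> A ` W j" using WA v_in_W[OF jd] by simp
  then obtain c' where "v (j - 1) = A (c' *s v j)" using vW[OF assms(2)] by auto
  then have "v (j - 1) = (c' * c) *s v (j - 1)" using c linA' by (simp add: lin_scale)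
  then have "c \<noteq> 0" using vW[OF jd] by auto
  then show ?thesis using c al by simp
qed

lemma matA: "i \<le> d \<Longrightarrow> j \<le> d \<Longrightarrow> mat A i j = (if 1 \<le> j \<and> i = j - 1 then alpha j else 0)"
proof -
  assume ij: "i \<le> d" "j \<le> d"
  show ?thesis
  proof (cases "j = 0")
    case True then show ?thesis using ij by (simp add: mat_def Av0 coord_zero)
  next
    case False
    then have "A (v j) = alpha j *s v (j - 1)" using Avj ij by simp
    then show ?thesis using ij False by (simp add: mat_def coord_scale coord_v)
  qed
qed

lemma matB: "i \<le> d \<Longrightarrow> j \<le> d \<Longrightarrow> mat B i j = (if j < d \<and> i = Suc j then 1 else 0)"
proof -
  assume ij: "i \<le> d" "j \<le> d"
  show ?thesis
  proof (cases "j = d")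
    case True then show ?thesis using ij by (simp add: mat_def Bv v_big coord_zero)
  next
    case False
    then show ?thesis using ij by (simp add: mat_def Bv coord_v)
  qed
qed

primrec g where
  "g 0 = 1"
| "g (Suc j) = g j * alpha (Suc j)"

lemma g_nz: "j \<le> d \<Longrightarrow> g j \<noteq> 0"
proof (induction j)
  case 0 then show ?case by simp
next
  case (Suc j) then show ?case using Avj[of "Suc j"] by simp
qed

definition sig where "sig X = mkop (\<lambda>i j. g j / g i * mat X j i)"

lemma lin_sig: "lin (sig X)" unfolding sig_def by (rule lin_mkop)

lemma mat_sig: "i \<le> d \<Longrightarrow> j \<le> d \<Longrightarrow> mat (sig X) i j = g j / g i * mat X j i"
  unfolding sig_def by (rule mat_mkop)

lemma sig_A: "sig A = B"
proof (rule lin_eq_mat[OF lin_sig linB'])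
  fix i j assume ij: "i \<le> d" "j \<le> d"
  show "mat (sig A) i j = mat B i j"
  proof (cases "i = Suc j")
    case True
    then have "alpha (Suc j) \<noteq> 0" using Avj[of "Suc j"] ij by simp
    then show ?thesis using True ij g_nz[of j] by (simp add: mat_sig matA matB)
  next
    case False then show ?thesis using ij by (auto simp: mat_sig matA matB)
  qed
qed

lemma sig_B: "sig B = A"
proof (rule lin_eq_mat[OF lin_sig linA'])
  fix i j assume ij: "i \<le> d" "j \<le> d"
  show "mat (sig B) i j = mat A i j"
  proof (cases "j = Suc i")
    case True
    then show ?thesis using True ij g_nz[of i] by (simp add: mat_sig matA matB)
  next
    case False then show ?thesis using ij by (auto simp: mat_sig matA matB)
  qed
qed

lemma sig_sig: "lin X \<Longrightarrow> sig (sig X) = X"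
  by (rule lin_eq_mat[OF lin_sig]) (auto simp: mat_sig g_nz)

lemma sig_add: "lin X \<Longrightarrow> lin Y \<Longrightarrow> sig (\<lambda>y. X y + Y y) = (\<lambda>y. sig X y + sig Y y)"
  by (rule lin_eq_mat[OF lin_sig lin_plus[OF lin_sig lin_sig]])
     (simp add: mat_sig mat_plus algebra_simps)

lemma sig_smult: "sig (\<lambda>y. c *s X y) = (\<lambda>y. c *s sig X y)"
  by (rule lin_eq_mat[OF lin_sig lin_smult[OF lin_sig]])
     (simp add: mat_sig mat_smult)

lemma sig_comp:
  assumes "lin X" "lin Y"
  shows "sig (X \<circ> Y) = sig Y \<circ> sig X"
proof (rule lin_eq_mat[OF lin_sig lin_comp[OF lin_sig lin_sig]])
  fix i j assume ij: "i \<le> d" "j \<le> d"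
  have "mat (sig (X \<circ> Y)) i j = g j / g i * (\<Sum>k\<le>d. mat X j k * mat Y k i)"
    using ij by (simp add: mat_sig mat_comp assms)
  also have "\<dots> = (\<Sum>k\<le>d. (g k / g i * mat Y k i) * (g j / g k * mat X j k))"
    unfolding sum_distrib_left
    by (intro sum.cong refl) (simp add: g_nz field_simps)
  also have "\<dots> = mat (sig Y \<circ> sig X) i j"
    using ij by (simp add: mat_comp lin_sig mat_sig)
  finally show "mat (sig (X \<circ> Y)) i j = mat (sig Y \<circ> sig X) i j" .
qed

lemma sig_anti: "antiautomorphism scale sig"
  unfolding antiautomorphism_def End_lin
proof (intro conjI ballI allI)
  show "bij_betw sig {X. lin X} {X. lin X}"
    by (rule bij_betw_byWitness[where f'=sig]) (auto simp: sig_sig lin_sig)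
qed (auto simp: sig_add sig_smult sig_comp)

end
context LRsetup begin

lemma Bpow_v: "(B ^^ n) (v k) = v (n + k)"
  unfolding v_def by (simp add: funpow_add)

lemma Apow_v: "n \<le> k \<Longrightarrow> k \<le> d \<Longrightarrow> \<exists>c. c \<noteq> 0 \<and> (A ^^ n) (v k) = c *s v (k - n)"
proof (induction n)
  case 0 then show ?case by (intro exI[of _ 1]) simp
next
  case (Suc n)
  then obtain c where c: "c \<noteq> 0" "(A ^^ n) (v k) = c *s v (k - n)" by auto
  have h: "1 \<le> k - n" "k - n \<le> d" using Suc.prems by auto
  have "(A ^^ Suc n) (v k) = A (c *s v (k - n))" using c by simp
  also have "\<dots> = (c * alpha (k - n)) *s v (k - Suc n)"
    using Avj[OF h] linA' by (simp add: lin_scale)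
  finally have eq: "(A ^^ Suc n) (v k) = (c * alpha (k - n)) *s v (k - Suc n)" .
  moreover have "c * alpha (k - n) \<noteq> 0" using c Avj[OF h] by simp
  ultimately show ?case by blast
qed

lemma lin_zero': "lin X \<Longrightarrow> X 0 = 0" by (rule lin_zero)

lemma Apow_v0: "k < n \<Longrightarrow> k \<le> d \<Longrightarrow> (A ^^ n) (v k) = 0"
proof -
  assume kn: "k < n" and kd: "k \<le> d"
  define m where "m = n - Suc k"
  have m: "n = m + Suc k" using kn unfolding m_def by simp
  obtain c where c: "(A ^^ k) (v k) = c *s v 0" using Apow_v[of k k] kd by auto
  have "(A ^^ n) (v k) = (A ^^ m) (A ((A ^^ k) (v k)))" unfolding m by (simp only: funpow_add comp_apply funpow.simps)
  also have "\<dots> = 0" using c linA' lin_pow[OF linA'] Av0 by (simp add: lin_scale lin_zero)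
  finally show ?thesis .
qed

definition aa where "aa = (SOME c. c \<noteq> 0 \<and> (A ^^ d) (v d) = c *s v 0)"

lemma aa: "aa \<noteq> 0" "(A ^^ d) (v d) = aa *s v 0"
  using someI_ex[OF Apow_v[of d d]] unfolding aa_def by auto

definition MM where "MM i j = (B ^^ i) \<circ> (A ^^ d) \<circ> (B ^^ (d - j))"

lemma lin_MM: "lin (MM i j)"
  unfolding MM_def by (intro lin_comp lin_pow linA' linB')

lemma MM_v: "i \<le> d \<Longrightarrow> j \<le> d \<Longrightarrow> k \<le> d \<Longrightarrow> MM i j (v k) = (if k = j then aa *s v i else 0)"
proof -
  assume ij: "i \<le> d" "j \<le> d" "k \<le> d"
  have 1: "MM i j (v k) = (B ^^ i) ((A ^^ d) (v (d - j + k)))"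
    unfolding MM_def by (simp add: Bpow_v)
  show ?thesis
  proof (cases "k = j")
    case True
    then have "d - j + k = d" using ij by simp
    then show ?thesis using 1 True aa lin_pow[OF linB'] by (simp add: lin_scale Bpow_v)
  next
    case False
    show ?thesis
    proof (cases "k < j")
      case True
      then have "(A ^^ d) (v (d - j + k)) = 0" using ij by (intro Apow_v0) auto
      then show ?thesis using 1 False lin_pow[OF linB'] by (simp add: lin_zero)
    next
      case False2: False
      then have "v (d - j + k) = 0" using ij False by (intro v_big) auto
      then show ?thesis using 1 False lin_pow[OF linB'] lin_pow[OF linA'] by (simp add: lin_zero)
    qed
  qed
qed

lemma MM_apply: "i \<le> d \<Longrightarrow> j \<le> d \<Longrightarrow> MM i j y = (aa * coord j y) *s v i"
proof -
  assume ij: "i \<le> d" "j \<le> d"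
  have "MM i j y = (\<Sum>k\<le>d. coord k y *s MM i j (v k))" by (rule lin_expand[OF lin_MM])
  also have "\<dots> = (\<Sum>k\<le>d. if k = j then (aa * coord j y) *s v i else 0)"
    using ij by (intro sum.cong refl) (auto simp: MM_v)
  also have "\<dots> = (aa * coord j y) *s v i" using ij by simp
  finally show ?thesis .
qed

lemma lin_decomp: "lin X \<Longrightarrow> X = (\<lambda>y. \<Sum>j\<le>d. \<Sum>i\<le>d. (mat X i j / aa) *s MM i j y)"
proof -
  assume X: "lin X"
  have "(\<lambda>y. \<Sum>j\<le>d. \<Sum>i\<le>d. (mat X i j / aa) *s MM i j y) = mkop (mat X)"
  proof
    fix y
    show "(\<Sum>j\<le>d. \<Sum>i\<le>d. (mat X i j / aa) *s MM i j y) = mkop (mat X) y"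
      unfolding mkop_def using aa(1)
      by (intro sum.cong refl) (simp add: MM_apply)
  qed
  also have "mkop (mat X) = X"
    by (rule lin_eq_mat[OF lin_mkop X]) (simp add: mat_mkop)
  finally show ?thesis by simp
qed

lemma lin_sumf: "(\<And>k. k \<in> K \<Longrightarrow> lin (f k)) \<Longrightarrow> lin (\<lambda>y. \<Sum>k\<in>K. f k y)"
  unfolding lin_def by (auto simp: sum.distrib scale_sum_right)

context
  fixes \<tau> assumes T: "antiautomorphism scale \<tau>" and TA: "\<tau> A = B" and TB: "\<tau> B = A"
begin

lemma T_add: "lin X \<Longrightarrow> lin Y \<Longrightarrow> \<tau> (\<lambda>y. X y + Y y) = (\<lambda>y. \<tau> X y + \<tau> Y y)"
  using T unfolding antiautomorphism_def End_lin by auto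
lemma T_smult: "lin X \<Longrightarrow> \<tau> (\<lambda>y. c *s X y) = (\<lambda>y. c *s \<tau> X y)"
  using T unfolding antiautomorphism_def End_lin by auto
lemma T_comp: "lin X \<Longrightarrow> lin Y \<Longrightarrow> \<tau> (X \<circ> Y) = \<tau> Y \<circ> \<tau> X"
  using T unfolding antiautomorphism_def End_lin by auto
lemma T_lin: "lin X \<Longrightarrow> lin (\<tau> X)"
  using T unfolding antiautomorphism_def End_lin bij_betw_def by auto

lemma T_zero: "\<tau> (\<lambda>y. 0) = (\<lambda>y. 0)"
proof -
  have l0: "lin (\<lambda>y. 0)" unfolding lin_def by auto
  have "\<tau> (\<lambda>y. 0) = \<tau> (\<lambda>y. (0::'v) + 0)" by simp
  also have "\<dots> = (\<lambda>y. \<tau> (\<lambda>y. 0) y + \<tau> (\<lambda>y. 0) y)" by (rule T_add[OF l0 l0])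
  finally have e: "\<tau> (\<lambda>y. 0) = (\<lambda>y. \<tau> (\<lambda>y. 0) y + \<tau> (\<lambda>y. 0) y)" .
  show ?thesis
  proof
    fix y
    have "\<tau> (\<lambda>y. 0) y = \<tau> (\<lambda>y. 0) y + \<tau> (\<lambda>y. 0) y" by (rule fun_cong[OF e])
    then show "\<tau> (\<lambda>y. 0) y = 0" by (metis add_cancel_left_right)
  qed
qed

lemma T_id: "\<tau> id = id"
proof -
  have "id \<in> \<tau> ` {X. lin X}"
    using T lin_id unfolding antiautomorphism_def End_lin bij_betw_def by auto
  then obtain X where X: "lin X" "\<tau> X = id" by auto
  have "\<tau> X = \<tau> (id \<circ> X)" by simp
  also have "\<dots> = \<tau> X \<circ> \<tau> id" by (rule T_comp[OF lin_id X(1)])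
  finally show ?thesis using X(2) by simp
qed

definition inS where "inS X \<longleftrightarrow> lin X \<and> \<tau> X = sig X"

lemma sig_zero: "sig (\<lambda>y. 0) = (\<lambda>y. 0)"
proof (rule lin_eq_mat[OF lin_sig])
  show "lin (\<lambda>y. 0)" by (simp add: lin_def)
  fix i j assume "i \<le> d" "j \<le> d"
  then show "mat (sig (\<lambda>y. 0)) i j = mat (\<lambda>y. 0) i j"
    by (simp add: mat_sig) (simp add: mat_def coord_zero)
qed

lemma sig_id: "sig id = id"
proof (rule lin_eq_mat[OF lin_sig lin_id])
  fix i j assume "i \<le> d" "j \<le> d"
  then show "mat (sig id) i j = mat id i j"
    by (simp add: mat_sig) (simp add: mat_def coord_v g_nz)
qed

lemma inS_comp: "inS X \<Longrightarrow> inS Y \<Longrightarrow> inS (X \<circ> Y)"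
  unfolding inS_def by (simp add: lin_comp T_comp sig_comp)
lemma inS_pow: "inS X \<Longrightarrow> inS (X ^^ n)"
  by (induction n) (auto simp: inS_def lin_id T_id sig_id lin_comp T_comp sig_comp)
lemma inS_smult: "inS X \<Longrightarrow> inS (\<lambda>y. c *s X y)"
  unfolding inS_def by (simp add: lin_smult T_smult sig_smult)
lemma inS_sum: "finite K \<Longrightarrow> (\<And>k. k \<in> K \<Longrightarrow> inS (f k)) \<Longrightarrow> inS (\<lambda>y. \<Sum>k\<in>K. f k y)"
proof (induction K rule: finite_induct)
  case empty then show ?case by (simp add: inS_def T_zero sig_zero lin_def)
next
  case (insert x F)
  then have h: "inS (f x)" "inS (\<lambda>y. \<Sum>k\<in>F. f k y)" by auto
  have e: "(\<lambda>y. \<Sum>k\<in>insert x F. f k y) = (\<lambda>y. f x y + (\<Sum>k\<in>F. f k y))"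
    using insert by simp
  define G where "G = (\<lambda>y. \<Sum>k\<in>F. f k y)"
  have e2: "(\<lambda>y. \<Sum>k\<in>insert x F. f k y) = (\<lambda>y. f x y + G y)"
    unfolding e G_def ..
  have hG: "lin G" "\<tau> G = sig G" "lin (f x)" "\<tau> (f x) = sig (f x)"
    using h unfolding inS_def G_def by auto
  have "\<tau> (\<lambda>y. f x y + G y) = (\<lambda>y. \<tau> (f x) y + \<tau> G y)" by (rule T_add[OF hG(3) hG(1)])
  also have "\<dots> = (\<lambda>y. sig (f x) y + sig G y)" using hG by simp
  also have "\<dots> = sig (\<lambda>y. f x y + G y)" by (rule sig_add[OF hG(3) hG(1), symmetric])
  finally show ?case unfolding e2 inS_def using lin_plus[OF hG(3) hG(1)] by simp
qed

lemma inS_A: "inS A" and inS_B: "inS B"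
  unfolding inS_def using linA' linB' TA TB sig_A sig_B by auto

lemma inS_MM: "inS (MM i j)"
  unfolding MM_def by (intro inS_comp inS_pow inS_A inS_B)

lemma T_unique: "lin X \<Longrightarrow> \<tau> X = sig X"
proof -
  assume X: "lin X"
  define F where "F = (\<lambda>y. \<Sum>j\<le>d. \<Sum>i\<le>d. (mat X i j / aa) *s MM i j y)"
  have e: "X = F" unfolding F_def by (rule lin_decomp[OF X])
  have "inS F" unfolding F_def
    by (intro inS_sum inS_smult inS_MM finite_atMost)
  then show ?thesis using e unfolding inS_def by simp
qed

end
end
theorem proposition6p1:
  fixes scale :: "'a::field \<Rightarrow> 'v::ab_group_add \<Rightarrow> 'v"
    and d :: nat and A B :: "'v \<Rightarrow> 'v"
  assumes "vector_space scale"
    and "vector_space.dim scale (UNIV :: 'v set) = d + 1"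
    and "LR_pair scale d A B"
  shows "\<exists>\<sigma>. antiautomorphism scale \<sigma> \<and> \<sigma> A = B \<and> \<sigma> B = A \<and>
           (\<forall>\<tau>. antiautomorphism scale \<tau> \<and> \<tau> A = B \<and> \<tau> B = A \<longrightarrow>
                 (\<forall>X\<in>End scale. \<tau> X = \<sigma> X)) \<and>
           (\<forall>X\<in>End scale. \<sigma> (\<sigma> X) = X)"
proof -
  obtain W where W: "is_decomposition scale d W" "lowers d W A" "raises d W B"
    and AB: "A \<in> End scale" "B \<in> End scale"
    using assms(3) unfolding LR_pair_def by blast
  interpret L: LRsetup scale d A B W
    using assms(1) W AB unfolding LRsetup_def LRsetup_axioms_def End_def by blast
  show ?thesis
  proof (intro exI[of _ L.sig] conjI allI impI ballI)
    show "antiautomorphism scale L.sig" by (rule L.sig_anti)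
    show "L.sig A = B" by (rule L.sig_A)
    show "L.sig B = A" by (rule L.sig_B)
  next
    fix X assume "X \<in> End scale"
    then show "L.sig (L.sig X) = X" using L.sig_sig L.End_lin by auto
  next
    fix \<tau> X
    assume H: "antiautomorphism scale \<tau> \<and> \<tau> A = B \<and> \<tau> B = A" and X: "X \<in> End scale"
    then have "L.lin X" using L.End_lin by auto
    then show "\<tau> X = L.sig X" using H L.T_unique by blast
  qed
qed

end
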